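(* Let $Q\in S$ be nonzero and $\mathbf u\in\mathbb Z^n_{>0}$. The following are equivalent: (1) $Q$ is quasi-homogeneous with respect to $\mathbf u$, i.e. $Q\in(S^{\mathbf u})_d$ for some $d$; (2) for every $\mathbf v\in\mathbb Z^n$ such that $\mathbf u+\mathbf v=(k,\dots,k)$ for some $k\in\mathbb Z$, $D(Q)$ is a graded $S^{\mathbf u}$-submodule of $D^{(\mathbf u,\mathbf v)}$ (i.e. all homogeneous components of every element of $D(Q)$ belong to $D(Q)$).
   Context: $\mathbb K$ a field of characteristic zero, $S=\mathbb K[x_1,\dots,x_n]$, $D=\mathrm{Der}_{\mathbb K}(S)$ with basis $\partial_i=\partial/\partial x_i$. For $g\in S$, $e\ge1$: $D(g;e)=\{\delta\in D:\delta(g)\in g^eS\}$; for nonzero $f=cf_1^{e_1}\cdots f_r^{e_r}$ (pairwise non-associate irreducibles, $c\in\mathbb K^*$), $D(f)=\bigcap_iD(f_i;e_i)$. $S^{\mathbf u}$ is $S$ with grading $\deg x_i=u_i$; $D^{(\mathbf u,\mathbf v)}$ is $D$ graded by $\deg(a\partial_i)=\deg^{\mathbf u}(a)+v_i$ for $\mathbf u$-homogeneous $a$. *)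

theory Defs
  imports "HOL-Library.Poly_Mapping" "HOL-Computational_Algebra.Factorial_Ring"
begin

text \<open>Polynomial ring S = K[x_v | v in 'v] with a finite type 'v of variables
  (n = CARD('v)); monomials are exponent vectors 'v =>0 nat.\<close>

type_synonym ('v, 'k) mpoly = "('v \<Rightarrow>\<^sub>0 nat) \<Rightarrow>\<^sub>0 'k"

definition pdiff :: "'v \<Rightarrow> ('v, 'k::comm_ring_1) mpoly \<Rightarrow> ('v, 'k) mpoly" where
  "pdiff i p = (\<Sum>(m::'v \<Rightarrow>\<^sub>0 nat)\<in>Poly_Mapping.keys p.
      Poly_Mapping.single (m - Poly_Mapping.single i 1)
        (of_nat (Poly_Mapping.lookup m i) * Poly_Mapping.lookup p m))"

text \<open>A derivation of S is represented by its coefficient vector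
  (delta = sum_i a_i d_i, D being free on the basis d_i); its action on a polynomial.\<close>
type_synonym ('v, 'k) der = "'v \<Rightarrow> ('v, 'k) mpoly"

definition der_apply :: "('v::finite, 'k::comm_ring_1) der \<Rightarrow> ('v, 'k) mpoly \<Rightarrow> ('v, 'k) mpoly" where
  "der_apply \<delta> g = (\<Sum>i\<in>UNIV. \<delta> i * pdiff i g)"

definition Dge :: "('v::finite, 'k::comm_ring_1) mpoly \<Rightarrow> nat \<Rightarrow> ('v, 'k) der set" where
  "Dge g e = {\<delta>. g ^ e dvd der_apply \<delta> g}"

definition Dlog :: "('v::finite, 'k::comm_ring_1) mpoly \<Rightarrow> ('v, 'k) der set" where
  "Dlog f = {\<delta>. \<forall>g e. irreducible g \<and> g dvd f \<and> g ^ e dvd f \<and> \<not> g ^ Suc e dvd f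
                  \<longrightarrow> \<delta> \<in> Dge g e}"

definition wdeg :: "('v::finite \<Rightarrow> int) \<Rightarrow> ('v \<Rightarrow>\<^sub>0 nat) \<Rightarrow> int" where
  "wdeg u m = (\<Sum>i\<in>UNIV. u i * int (Poly_Mapping.lookup m i))"

definition whomog :: "('v::finite \<Rightarrow> int) \<Rightarrow> int \<Rightarrow> ('v, 'k::zero) mpoly \<Rightarrow> bool" where
  "whomog u d p \<longleftrightarrow> (\<forall>m\<in>Poly_Mapping.keys p. wdeg u m = d)"

definition hcomp :: "('v::finite \<Rightarrow> int) \<Rightarrow> int \<Rightarrow> ('v, 'k::comm_ring_1) mpoly \<Rightarrow> ('v, 'k) mpoly" where
  "hcomp u d p = (\<Sum>m\<in>{m\<in>Poly_Mapping.keys p. wdeg u m = d}. Poly_Mapping.single m (Poly_Mapping.lookup p m))"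

text \<open>Homogeneous component of degree d of a derivation in D^(u,v),
  where deg(a d_i) = deg^u(a) + v_i.\<close>
definition hcomp_der :: "('v::finite \<Rightarrow> int) \<Rightarrow> ('v \<Rightarrow> int) \<Rightarrow> int \<Rightarrow> ('v, 'k::comm_ring_1) der \<Rightarrow> ('v, 'k) der" where
  "hcomp_der u v d \<delta> = (\<lambda>i. hcomp u (d - v i) (\<delta> i))"

definition graded_der_set :: "('v::finite \<Rightarrow> int) \<Rightarrow> ('v \<Rightarrow> int) \<Rightarrow> ('v, 'k::comm_ring_1) der set \<Rightarrow> bool" where
  "graded_der_set u v M \<longleftrightarrow> (\<forall>\<delta>\<in>M. \<forall>d. hcomp_der u v d \<delta> \<in> M)"

end

theory Submission
  imports Defs
begin

lemma poly_repr: "(p::'a \<Rightarrow>\<^sub>0 'b::comm_monoid_add) = (\<Sum>m\<in>Poly_Mapping.keys p. Poly_Mapping.single m (Poly_Mapping.lookup p m))"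
proof (rule poly_mapping_eqI)
  fix k
  have "Poly_Mapping.lookup (\<Sum>m\<in>Poly_Mapping.keys p. Poly_Mapping.single m (Poly_Mapping.lookup p m)) k
     = (\<Sum>m\<in>Poly_Mapping.keys p. (if m = k then Poly_Mapping.lookup p m else 0))"
    by (simp add: lookup_sum lookup_single when_def)
  also have "\<dots> = Poly_Mapping.lookup p k"
    by (simp add: in_keys_iff)
  finally show "Poly_Mapping.lookup p k = Poly_Mapping.lookup (\<Sum>m\<in>Poly_Mapping.keys p. Poly_Mapping.single m (Poly_Mapping.lookup p m)) k" by simp
qed

lemma lookup_hcomp: "Poly_Mapping.lookup (hcomp u d p) m = (if wdeg u m = d then Poly_Mapping.lookup p m else 0)"
proof -
  have "Poly_Mapping.lookup (hcomp u d p) m = (\<Sum>m'\<in>{m'\<in>Poly_Mapping.keys p. wdeg u m' = d}. (if m' = m then Poly_Mapping.lookup p m' else 0))"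
    by (simp add: hcomp_def lookup_sum lookup_single when_def)
  also have "\<dots> = (if wdeg u m = d then Poly_Mapping.lookup p m else 0)"
    by (auto simp: in_keys_iff)
  finally show ?thesis .
qed

lemma hcomp_add: "hcomp u d (p + q) = hcomp u d p + hcomp u d q"
  by (rule poly_mapping_eqI) (simp add: lookup_hcomp lookup_add)
lemma hcomp_diff: "hcomp u d (p - q) = hcomp u d p - hcomp u d q"
  by (rule poly_mapping_eqI) (simp add: lookup_hcomp lookup_minus)
lemma hcomp_zero[simp]: "hcomp u d 0 = 0"
  by (rule poly_mapping_eqI) (simp add: lookup_hcomp)
lemma hcomp_sum: "hcomp u d (sum f A) = (\<Sum>a\<in>A. hcomp u d (f a))"
  by (induction A rule: infinite_finite_induct) (auto simp: hcomp_add)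

lemma wdeg_add: "wdeg u (m + n) = wdeg u m + wdeg u n"
  by (simp add: wdeg_def lookup_add algebra_simps sum.distrib)
lemma wdeg_zero[simp]: "wdeg u 0 = 0"
  by (simp add: wdeg_def)
lemma wdeg_single: "wdeg u (Poly_Mapping.single i 1) = u i"
proof -
  have "wdeg u (Poly_Mapping.single i 1) = (\<Sum>j\<in>UNIV. if j = i then u i else 0)"
    unfolding wdeg_def by (rule sum.cong) (auto simp: lookup_single when_def)
  then show ?thesis by simp
qed

lemma wdeg_single'[simp]: "wdeg u (Poly_Mapping.single i (Suc 0)) = u i"
  using wdeg_single by simp

lemma whomog_iff: "whomog u d p \<longleftrightarrow> (\<forall>m. Poly_Mapping.lookup p m \<noteq> 0 \<longrightarrow> wdeg u m = d)"
  by (auto simp: whomog_def in_keys_iff)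

lemma whomog_hcomp: "whomog u d (hcomp u d p)"
  by (simp add: whomog_iff lookup_hcomp)

lemma hcomp_whomog: "whomog u a p \<Longrightarrow> hcomp u c p = (if c = a then p else 0)"
  by (rule poly_mapping_eqI) (auto simp: lookup_hcomp whomog_iff)

lemma whomog_single: "whomog u (wdeg u m) (Poly_Mapping.single m c)"
  by (auto simp: whomog_iff lookup_single when_def)

lemma whomog_mult: "whomog u a p \<Longrightarrow> whomog u b q \<Longrightarrow> whomog u (a + b) (p * q)"
  unfolding whomog_def using keys_mult[of p q] by (auto simp: wdeg_add)

lemma whomog_add: "whomog u a p \<Longrightarrow> whomog u a q \<Longrightarrow> whomog u a (p + q)"
  unfolding whomog_iff lookup_add by (metis add.left_neutral)

lemma whomog_zero[simp]: "whomog u a 0"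
  by (simp add: whomog_def)

lemma whomog_sum: "(\<And>i. i \<in> A \<Longrightarrow> whomog u a (f i)) \<Longrightarrow> whomog u a (sum f A)"
  by (induction A rule: infinite_finite_induct) (auto intro: whomog_add)

lemma whomog_one: "whomog u 0 1"
  by (simp add: whomog_def)

lemma whomog_power: "whomog u a p \<Longrightarrow> whomog u (int n * a) (p ^ n)"
  by (induction n) (auto simp: whomog_one algebra_simps dest: whomog_mult)

lemma hcomp_decomp:
  assumes "finite S" "wdeg u ` Poly_Mapping.keys p \<subseteq> S"
  shows "p = (\<Sum>b\<in>S. hcomp u b p)"
proof (rule poly_mapping_eqI)
  fix m
  have "Poly_Mapping.lookup (\<Sum>b\<in>S. hcomp u b p) m = (\<Sum>b\<in>S. if wdeg u m = b then Poly_Mapping.lookup p m else 0)"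
    by (simp add: lookup_sum lookup_hcomp)
  also have "\<dots> = (if wdeg u m \<in> S then Poly_Mapping.lookup p m else 0)"
    using assms(1) by (simp add: sum.delta')
  also have "\<dots> = Poly_Mapping.lookup p m"
    using assms(2) by (force simp: in_keys_iff image_subset_iff)
  finally show "Poly_Mapping.lookup p m = Poly_Mapping.lookup (\<Sum>b\<in>S. hcomp u b p) m" by simp
qed

lemma hcomp_out: "c \<notin> wdeg u ` Poly_Mapping.keys p \<Longrightarrow> hcomp u c p = 0"
  by (rule poly_mapping_eqI) (auto simp: lookup_hcomp in_keys_iff)

lemma hcomp_mult_homog:
  fixes p q :: "('v::finite, 'k::comm_ring_1) mpoly"
  assumes "whomog u a p"
  shows "hcomp u c (p * q) = p * hcomp u (c - a) q"
proof -
  define S where "S = wdeg u ` Poly_Mapping.keys q"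
  have fS: "finite S" by (simp add: S_def)
  have "p * q = (\<Sum>b\<in>S. p * hcomp u b q)"
    using hcomp_decomp[OF fS, of u q] by (simp add: S_def sum_distrib_left[symmetric])
  then have "hcomp u c (p * q) = (\<Sum>b\<in>S. hcomp u c (p * hcomp u b q))"
    by (simp add: hcomp_sum)
  also have "\<dots> = (\<Sum>b\<in>S. if b = c - a then p * hcomp u b q else 0)"
  proof (rule sum.cong)
    fix b assume "b \<in> S"
    have "whomog u (a + b) (p * hcomp u b q)" using assms whomog_hcomp whomog_mult by blast
    then show "hcomp u c (p * hcomp u b q) = (if b = c - a then p * hcomp u b q else 0)"
      by (auto simp: hcomp_whomog)
  qed simp
  also have "\<dots> = p * hcomp u (c - a) q"
    using fS by (auto simp: sum.delta' S_def hcomp_out)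
  finally show ?thesis .
qed

lemma mult_lead_nonzero:
  fixes f g :: "('v::finite \<Rightarrow>\<^sub>0 nat) \<Rightarrow>\<^sub>0 'k::idom"
  assumes "f \<noteq> 0" "g \<noteq> 0"
  shows "f * g \<noteq> 0"
proof -
  obtain \<iota> :: "'v \<Rightarrow> nat" and n where "\<iota> ` UNIV = {i. i < n}" "inj_on \<iota> UNIV"
    using finite_imp_inj_to_nat_seg[of "UNIV :: 'v set"] by auto
  then have inj\<iota>: "inj \<iota>" by simp
  define \<mu> :: "('v \<Rightarrow>\<^sub>0 nat) \<Rightarrow> (nat \<Rightarrow>\<^sub>0 nat)" where
    "\<mu> m = (\<Sum>v\<in>UNIV. Poly_Mapping.single (\<iota> v) (Poly_Mapping.lookup m v))" for m
  have \<mu>add: "\<mu> (a + b) = \<mu> a + \<mu> b" for a b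
    by (simp add: \<mu>_def lookup_add single_add sum.distrib)
  have \<mu>lookup: "Poly_Mapping.lookup (\<mu> a) (\<iota> w) = Poly_Mapping.lookup a w" for a w
  proof -
    have "Poly_Mapping.lookup (\<mu> a) (\<iota> w) = (\<Sum>v\<in>UNIV. if v = w then Poly_Mapping.lookup a v else 0)"
      unfolding \<mu>_def lookup_sum
      by (rule sum.cong) (auto simp: lookup_single when_def inj\<iota> inj_eq)
    then show ?thesis by simp
  qed
  have \<mu>inj: "\<mu> a = \<mu> b \<Longrightarrow> a = b" for a b
    by (rule poly_mapping_eqI) (metis \<mu>lookup)
  define F where "F = Poly_Mapping.keys f"
  define G where "G = Poly_Mapping.keys g"
  have fF: "finite F" "F \<noteq> {}" using assms(1) by (auto simp: F_def)
  have fG: "finite G" "G \<noteq> {}" using assms(2) by (auto simp: G_def)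
  obtain a0 where a0: "a0 \<in> F" "\<And>a. a \<in> F \<Longrightarrow> \<mu> a \<le> \<mu> a0"
  proof -
    have "Max (\<mu> ` F) \<in> \<mu> ` F" using fF by simp
    then obtain a0 where "a0 \<in> F" "\<mu> a0 = Max (\<mu> ` F)" by auto
    then show ?thesis using that fF by auto
  qed
  obtain b0 where b0: "b0 \<in> G" "\<And>b. b \<in> G \<Longrightarrow> \<mu> b \<le> \<mu> b0"
  proof -
    have "Max (\<mu> ` G) \<in> \<mu> ` G" using fG by simp
    then obtain b0 where "b0 \<in> G" "\<mu> b0 = Max (\<mu> ` G)" by auto
    then show ?thesis using that fG by auto
  qed
  have uniq: "a = a0 \<and> b = b0" if "a \<in> F" "b \<in> G" "a + b = a0 + b0" for a b
  proof -
    have e: "\<mu> a + \<mu> b = \<mu> a0 + \<mu> b0" using that(3) by (metis \<mu>add)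
    have l1: "\<mu> a \<le> \<mu> a0" "\<mu> b \<le> \<mu> b0" using a0 b0 that by auto
    have "\<mu> a = \<mu> a0"
    proof (rule ccontr)
      assume "\<mu> a \<noteq> \<mu> a0"
      then have "\<mu> a < \<mu> a0" using l1 by simp
      then have "\<mu> a + \<mu> b < \<mu> a0 + \<mu> b0" using l1(2) by (rule add_less_le_mono)
      then show False using e by simp
    qed
    then have "a = a0" by (rule \<mu>inj)
    then show ?thesis using that(3) by simp
  qed
  let ?f = "Poly_Mapping.lookup f" and ?g = "Poly_Mapping.lookup g"
  have "Poly_Mapping.lookup (f * g) (a0 + b0) = prod_fun ?f ?g (a0 + b0)"
    by (simp add: times_poly_mapping.rep_eq)
  also have "\<dots> = (\<Sum>(a, b). ?f a * ?g b when a0 + b0 = a + b)"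
    by (rule prod_fun_unfold_prod) auto
  also have "\<dots> = (\<Sum>(a, b). ?f a * ?g b when (a0, b0) = (a, b))"
  proof (rule Sum_any.cong)
    fix ab :: "('v \<Rightarrow>\<^sub>0 nat) \<times> ('v \<Rightarrow>\<^sub>0 nat)"
    obtain a b where [simp]: "ab = (a, b)" by (cases ab) simp_all
    show "(case ab of (a, b) \<Rightarrow> ?f a * ?g b when a0 + b0 = a + b) =
         (case ab of (a, b) \<Rightarrow> ?f a * ?g b when (a0, b0) = (a, b))"
      using uniq[of a b] by (auto simp: when_def F_def G_def in_keys_iff) blast+
  qed
  also have "\<dots> = (\<Sum>ab. (case ab of (a, b) \<Rightarrow> ?f a * ?g b) when (a0, b0) = ab)"
    unfolding split_def when_def by auto
  also have "\<dots> = ?f a0 * ?g b0" by simp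
  also have "\<dots> \<noteq> 0" using a0(1) b0(1) by (simp add: F_def G_def in_keys_iff)
  finally show ?thesis by auto
qed

definition tdeg :: "('v::finite \<Rightarrow> int) \<Rightarrow> ('v, 'k::zero) mpoly \<Rightarrow> int" where
  "tdeg u p = Max (wdeg u ` Poly_Mapping.keys p)"
definition bdeg :: "('v::finite \<Rightarrow> int) \<Rightarrow> ('v, 'k::zero) mpoly \<Rightarrow> int" where
  "bdeg u p = Min (wdeg u ` Poly_Mapping.keys p)"
definition width :: "('v::finite \<Rightarrow> int) \<Rightarrow> ('v, 'k::zero) mpoly \<Rightarrow> int" where
  "width u p = tdeg u p - bdeg u p"

lemma tdeg_ge: "m \<in> Poly_Mapping.keys p \<Longrightarrow> wdeg u m \<le> tdeg u p"
  by (simp add: tdeg_def)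
lemma bdeg_le: "m \<in> Poly_Mapping.keys p \<Longrightarrow> bdeg u p \<le> wdeg u m"
  by (simp add: bdeg_def)
lemma tdeg_in: "p \<noteq> 0 \<Longrightarrow> tdeg u p \<in> wdeg u ` Poly_Mapping.keys p"
  unfolding tdeg_def by (rule Max_in) auto
lemma bdeg_in: "p \<noteq> 0 \<Longrightarrow> bdeg u p \<in> wdeg u ` Poly_Mapping.keys p"
  unfolding bdeg_def by (rule Min_in) auto
lemma deg_range: "c \<in> wdeg u ` Poly_Mapping.keys p \<Longrightarrow> bdeg u p \<le> c \<and> c \<le> tdeg u p"
  using tdeg_ge bdeg_le by blast

lemma width_nonneg: "p \<noteq> 0 \<Longrightarrow> 0 \<le> width u p"
  using tdeg_in[of p u] deg_range[of "tdeg u p" u p] by (simp add: width_def)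

lemma hcomp_ne_iff: "hcomp u c p \<noteq> 0 \<longleftrightarrow> c \<in> wdeg u ` Poly_Mapping.keys p"
proof
  assume "hcomp u c p \<noteq> 0"
  then obtain m where "Poly_Mapping.lookup (hcomp u c p) m \<noteq> 0"
    by (metis lookup_zero poly_mapping_eqI)
  then show "c \<in> wdeg u ` Poly_Mapping.keys p"
    by (auto simp: lookup_hcomp in_keys_iff split: if_splits)
next
  assume "c \<in> wdeg u ` Poly_Mapping.keys p"
  then obtain m where "m \<in> Poly_Mapping.keys p" "wdeg u m = c" by auto
  then have "Poly_Mapping.lookup (hcomp u c p) m \<noteq> 0" by (simp add: lookup_hcomp in_keys_iff)
  then show "hcomp u c p \<noteq> 0" by auto
qed

lemma hcomp_mult_expand:
  fixes p q :: "('v::finite, 'k::comm_ring_1) mpoly"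
  shows "hcomp u c (p * q) = (\<Sum>x\<in>wdeg u ` Poly_Mapping.keys p. hcomp u x p * hcomp u (c - x) q)"
proof -
  have "p * q = (\<Sum>x\<in>wdeg u ` Poly_Mapping.keys p. hcomp u x p * q)"
    using hcomp_decomp[of "wdeg u ` Poly_Mapping.keys p" u p] by (simp add: sum_distrib_right[symmetric])
  then show ?thesis
    by (simp add: hcomp_sum hcomp_mult_homog[OF whomog_hcomp])
qed

lemma tdeg_mult:
  fixes p q :: "('v::finite, 'k::idom) mpoly"
  assumes "p \<noteq> 0" "q \<noteq> 0"
  shows "tdeg u (p * q) = tdeg u p + tdeg u q"
proof -
  let ?a = "tdeg u p" and ?b = "tdeg u q" and ?S = "wdeg u ` Poly_Mapping.keys p"
  have big: "hcomp u c (p * q) = 0" if "c > ?a + ?b" for c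
  proof -
    have "hcomp u x p * hcomp u (c - x) q = 0" if "x \<in> ?S" for x
    proof -
      have "x \<le> ?a" using that tdeg_ge by auto
      then have "c - x > ?b" using \<open>c > ?a + ?b\<close> by simp
      then have "c - x \<notin> wdeg u ` Poly_Mapping.keys q" using deg_range[of "c - x" u q] by linarith
      then show ?thesis by (simp add: hcomp_out)
    qed
    then show ?thesis by (simp add: hcomp_mult_expand)
  qed
  have top: "hcomp u (?a + ?b) (p * q) \<noteq> 0"
  proof -
    have "hcomp u (?a + ?b) (p * q) = (\<Sum>x\<in>?S. if x = ?a then hcomp u ?a p * hcomp u ?b q else 0)"
      unfolding hcomp_mult_expand
    proof (rule sum.cong)
      fix x assume "x \<in> ?S"
      then have "x \<le> ?a" using tdeg_ge by auto
      show "hcomp u x p * hcomp u (?a + ?b - x) q = (if x = ?a then hcomp u ?a p * hcomp u ?b q else 0)"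
      proof (cases "x = ?a")
        case False
        then have "?a + ?b - x > ?b" using \<open>x \<le> ?a\<close> by simp
        then have "?a + ?b - x \<notin> wdeg u ` Poly_Mapping.keys q" using deg_range[of "?a + ?b - x" u q] by linarith
        then show ?thesis using False by (simp add: hcomp_out)
      qed simp
    qed simp
    also have "\<dots> = hcomp u ?a p * hcomp u ?b q"
      using tdeg_in[OF assms(1)] by (simp add: sum.delta')
    also have "\<dots> \<noteq> 0"
      using mult_lead_nonzero hcomp_ne_iff tdeg_in assms by metis
    finally show ?thesis .
  qed
  have pq: "p * q \<noteq> 0" using assms mult_lead_nonzero by blast
  have "tdeg u (p * q) \<le> ?a + ?b"
  proof (rule ccontr)
    assume "\<not> ?thesis"
    then have "hcomp u (tdeg u (p * q)) (p * q) = 0" using big by simp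
    then show False using tdeg_in[OF pq] hcomp_ne_iff by metis
  qed
  moreover have "?a + ?b \<le> tdeg u (p * q)"
    using top hcomp_ne_iff deg_range by blast
  ultimately show ?thesis by simp
qed

lemma wdeg_neg: "wdeg (\<lambda>i. - u i) m = - wdeg u m"
  by (simp add: wdeg_def sum_negf)

lemma bdeg_neg: "p \<noteq> 0 \<Longrightarrow> bdeg u p = - tdeg (\<lambda>i. - u i) p"
proof -
  assume p: "p \<noteq> 0"
  have "tdeg (\<lambda>i. - u i) p = - bdeg u p"
    unfolding tdeg_def
  proof (rule Max_eqI)
    show "finite (wdeg (\<lambda>i. - u i) ` Poly_Mapping.keys p)" by simp
    show "y \<le> - bdeg u p" if "y \<in> wdeg (\<lambda>i. - u i) ` Poly_Mapping.keys p" for y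
      using that bdeg_le[of _ p u] by (auto simp: wdeg_neg)
    show "- bdeg u p \<in> wdeg (\<lambda>i. - u i) ` Poly_Mapping.keys p"
      using bdeg_in[OF p, of u] by (auto simp: wdeg_neg)
  qed
  then show ?thesis by simp
qed

lemma bdeg_mult:
  fixes p q :: "('v::finite, 'k::idom) mpoly"
  assumes "p \<noteq> 0" "q \<noteq> 0"
  shows "bdeg u (p * q) = bdeg u p + bdeg u q"
  using assms mult_lead_nonzero[OF assms] by (simp add: bdeg_neg tdeg_mult)

lemma width_mult:
  fixes p q :: "('v::finite, 'k::idom) mpoly"
  assumes "p \<noteq> 0" "q \<noteq> 0"
  shows "width u (p * q) = width u p + width u q"
  using assms by (simp add: width_def tdeg_mult bdeg_mult)

lemma width_dvd:
  fixes g F :: "('v::finite, 'k::idom) mpoly"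
  assumes "g dvd F" "F \<noteq> 0"
  shows "width u g \<le> width u F"
proof -
  obtain b where F: "F = g * b" using assms(1) by (auto elim: dvdE)
  then have "g \<noteq> 0" "b \<noteq> 0" using assms(2) by auto
  then have "width u F = width u g + width u b" using F width_mult by blast
  moreover have "0 \<le> width u b" using \<open>b \<noteq> 0\<close> by (rule width_nonneg)
  ultimately show ?thesis by simp
qed

lemma width_zero_whomog: "width u p = 0 \<Longrightarrow> whomog u (tdeg u p) p"
  unfolding whomog_def width_def
proof
  fix m assume "tdeg u p - bdeg u p = 0" "m \<in> Poly_Mapping.keys p"
  then show "wdeg u m = tdeg u p" using tdeg_ge[of m p u] bdeg_le[of m p u] by simp
qed

lemma whomog_width: "p \<noteq> 0 \<Longrightarrow> whomog u d p \<Longrightarrow> width u p = 0"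
  using tdeg_in[of p u] bdeg_in[of p u] by (auto simp: whomog_def width_def)

lemma width_power:
  fixes g :: "('v::finite, 'k::idom) mpoly"
  assumes "g \<noteq> 0"
  shows "g ^ n \<noteq> 0 \<and> width u (g ^ n) = int n * width u g"
proof (induction n)
  case 0
  have "width u (1 :: ('v, 'k) mpoly) = 0"
    by (rule whomog_width[OF _ whomog_one]) simp
  then show ?case by simp
next
  case (Suc n)
  then have "g * g ^ n \<noteq> 0" using assms mult_lead_nonzero by blast
  moreover have "width u (g * g ^ n) = width u g + width u (g ^ n)"
    using Suc assms width_mult by blast
  ultimately show ?case using Suc by (simp add: algebra_simps)
qed

lemma lookup_single_mult:
  fixes p :: "('a::cancel_comm_monoid_add) \<Rightarrow>\<^sub>0 'b::comm_semiring_1"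
  shows "Poly_Mapping.lookup (Poly_Mapping.single a c * p) k =
    (if \<exists>m. k = a + m then c * Poly_Mapping.lookup p (THE m. k = a + m) else 0)"
proof -
  have "Poly_Mapping.lookup (Poly_Mapping.single a c * p) k =
     (\<Sum>l. (c * (\<Sum>q. Poly_Mapping.lookup p q when k = l + q)) when a = l)"
    by (simp add: lookup_mult lookup_single when_mult)
  also have "\<dots> = c * (\<Sum>q. Poly_Mapping.lookup p q when k = a + q)"
    by simp
  also have "\<dots> = (if \<exists>m. k = a + m then c * Poly_Mapping.lookup p (THE m. k = a + m) else 0)"
  proof (cases "\<exists>m. k = a + m")
    case True
    then obtain m where m: "k = a + m" by blast
    then have th: "(THE m. k = a + m) = m" by auto
    have "(\<Sum>q. Poly_Mapping.lookup p q when k = a + q) = (\<Sum>q. Poly_Mapping.lookup p q when q = m)"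
      using m by (intro Sum_any.cong) (auto simp: when_def)
    then show ?thesis using True th by simp
  next
    case False
    then show ?thesis by (simp add: when_def)
  qed
  finally show ?thesis .
qed

lemma lookup_single_mult_add:
  fixes p :: "('a::cancel_comm_monoid_add) \<Rightarrow>\<^sub>0 'b::comm_semiring_1"
  shows "Poly_Mapping.lookup (Poly_Mapping.single a c * p) (a + m) = c * Poly_Mapping.lookup p m"
  by (subst lookup_single_mult) auto

lemma lookup_const_mult:
  fixes p :: "('a::cancel_comm_monoid_add) \<Rightarrow>\<^sub>0 'b::comm_semiring_1"
  shows "Poly_Mapping.lookup (Poly_Mapping.single 0 c * p) m = c * Poly_Mapping.lookup p m"
  using lookup_single_mult_add[of 0 c p m] by simp

lemma lookup_pdiff:
  fixes p :: "('v, 'k::comm_ring_1) mpoly"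
  shows "Poly_Mapping.lookup (pdiff i p) m = of_nat (Poly_Mapping.lookup m i + 1) * Poly_Mapping.lookup p (m + Poly_Mapping.single i 1)"
proof -
  let ?e = "Poly_Mapping.single i (1::nat)"
  have key: "(m' - ?e = m) \<longleftrightarrow> (m' = m + ?e)" if "Poly_Mapping.lookup m' i \<noteq> 0" for m'
  proof
    assume "m' - ?e = m"
    then show "m' = m + ?e"
      by (intro poly_mapping_eqI) (use that in \<open>auto simp: lookup_add lookup_minus lookup_single when_def\<close>)
  next
    assume "m' = m + ?e"
    then show "m' - ?e = m"
      by (intro poly_mapping_eqI) (auto simp: lookup_add lookup_minus lookup_single when_def)
  qed
  have "Poly_Mapping.lookup (pdiff i p) m = (\<Sum>m'\<in>Poly_Mapping.keys p.
      (if m' - ?e = m then of_nat (Poly_Mapping.lookup m' i) * Poly_Mapping.lookup p m' else 0))"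
    by (simp add: pdiff_def lookup_sum lookup_single when_def)
  also have "\<dots> = (\<Sum>m'\<in>Poly_Mapping.keys p.
      (if m' = m + ?e then of_nat (Poly_Mapping.lookup m' i) * Poly_Mapping.lookup p m' else 0))"
  proof (rule sum.cong)
    fix m' assume "m' \<in> Poly_Mapping.keys p"
    show "(if m' - ?e = m then of_nat (Poly_Mapping.lookup m' i) * Poly_Mapping.lookup p m' else 0) =
          (if m' = m + ?e then of_nat (Poly_Mapping.lookup m' i) * Poly_Mapping.lookup p m' else 0)"
    proof (cases "Poly_Mapping.lookup m' i = 0")
      case True then show ?thesis by simp
    next
      case False then show ?thesis using key[OF False] by simp
    qed
  qed simp
  also have "\<dots> = of_nat (Poly_Mapping.lookup m i + 1) * Poly_Mapping.lookup p (m + ?e)"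
    by (simp add: in_keys_iff lookup_add)
  finally show ?thesis .
qed

lemma pdiff_add: "pdiff i (p + q) = pdiff i p + pdiff i q"
  by (rule poly_mapping_eqI) (simp add: lookup_pdiff lookup_add algebra_simps)

lemma hcomp_pdiff: "hcomp u c (pdiff i p) = pdiff i (hcomp u (c + u i) p)"
  by (rule poly_mapping_eqI) (simp add: lookup_pdiff lookup_hcomp wdeg_add wdeg_single)

lemma whomog_pdiff: "whomog u a p \<Longrightarrow> whomog u (a - u i) (pdiff i p)"
proof -
  assume h: "whomog u a p"
  have "pdiff i p = hcomp u (a - u i) (pdiff i p)" by (simp add: hcomp_pdiff hcomp_whomog[OF h])
  then show ?thesis by (metis whomog_hcomp)
qed

lemma der_hcomp:
  fixes g :: "('v::finite, 'k::comm_ring_1) mpoly"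
  assumes hg: "whomog u w g" and uv: "\<forall>i. u i + v i = k"
  shows "der_apply (hcomp_der u v d \<delta>) g = hcomp u (d - k + w) (der_apply \<delta> g)"
proof -
  have "hcomp u (d - k + w) (\<delta> i * pdiff i g) = hcomp u (d - v i) (\<delta> i) * pdiff i g" for i
  proof -
    have "hcomp u (d - k + w) (\<delta> i * pdiff i g) = hcomp u (d - k + w) (pdiff i g * \<delta> i)"
      by (simp add: mult.commute)
    also have "\<dots> = pdiff i g * hcomp u (d - k + w - (w - u i)) (\<delta> i)"
      by (rule hcomp_mult_homog[OF whomog_pdiff[OF hg]])
    also have "d - k + w - (w - u i) = d - v i" using uv by (metis add_diff_cancel_left' diff_diff_eq2 diff_diff_eq diff_add_cancel)
    finally show ?thesis by (simp add: mult.commute)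
  qed
  then show ?thesis
    by (simp add: der_apply_def hcomp_der_def hcomp_sum)
qed

lemma homog_dvd_hcomp:
  fixes g X :: "('v::finite, 'k::comm_ring_1) mpoly"
  assumes hg: "whomog u w g" and d: "g ^ e dvd X"
  shows "g ^ e dvd hcomp u c X"
proof -
  obtain b where X: "X = g ^ e * b" using d by (auto elim: dvdE)
  have "hcomp u c X = g ^ e * hcomp u (c - int e * w) b"
    unfolding X by (rule hcomp_mult_homog[OF whomog_power[OF hg]])
  then show ?thesis by simp
qed

lemma factor_homog:
  fixes Q g :: "('v::finite, 'k::idom) mpoly"
  assumes "Q \<noteq> 0" "whomog u D Q" "g dvd Q"
  shows "whomog u (tdeg u g) g"
proof -
  obtain h where Q: "Q = g * h" using assms(3) by (auto elim: dvdE)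
  then have gh: "g \<noteq> 0" "h \<noteq> 0" using assms(1) by auto
  have "width u Q = 0" using whomog_width assms by blast
  then have "width u g + width u h = 0" using Q width_mult[OF gh] by simp
  then have "width u g = 0" using width_nonneg[OF gh(1), of u] width_nonneg[OF gh(2), of u] by simp
  then show ?thesis by (rule width_zero_whomog)
qed

lemma dir1:
  fixes Q :: "('v::finite, 'k::field) mpoly"
  assumes "Q \<noteq> 0" "whomog u D Q" "\<exists>k. \<forall>i. u i + v i = k"
  shows "graded_der_set u v (Dlog Q)"
  unfolding graded_der_set_def
proof (intro ballI allI)
  fix \<delta> d assume \<delta>: "\<delta> \<in> Dlog Q"
  obtain k where uv: "\<forall>i. u i + v i = k" using assms(3) by blast
  show "hcomp_der u v d \<delta> \<in> Dlog Q"
    unfolding Dlog_def Dge_def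
  proof (intro CollectI allI impI)
    fix g e assume H: "irreducible g \<and> g dvd Q \<and> g ^ e dvd Q \<and> \<not> g ^ Suc e dvd Q"
    have hg: "whomog u (tdeg u g) g" using factor_homog assms(1,2) H by blast
    have "g ^ e dvd der_apply \<delta> g" using \<delta> H by (auto simp: Dlog_def Dge_def)
    then have "g ^ e dvd hcomp u (d - k + tdeg u g) (der_apply \<delta> g)"
      by (rule homog_dvd_hcomp[OF hg])
    then show "g ^ e dvd der_apply (hcomp_der u v d \<delta>) g"
      by (simp add: der_hcomp[OF hg uv])
  qed
qed


lemma wdeg_nonneg: "\<forall>i. u i > 0 \<Longrightarrow> 0 \<le> wdeg u m"
  unfolding wdeg_def by (intro sum_nonneg mult_nonneg_nonneg) (auto intro: order.strict_implies_order)

lemma wdeg_zero_iff: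
  assumes "\<forall>i. u i > 0" "wdeg u m = 0"
  shows "m = 0"
proof (rule poly_mapping_eqI)
  fix i
  have up: "0 \<le> u j" for j using assms(1) less_imp_le by blast
  have nn: "\<And>j. j \<in> UNIV \<Longrightarrow> 0 \<le> u j * int (Poly_Mapping.lookup m j)"
    using up by simp
  have eq: "(\<Sum>j\<in>UNIV. u j * int (Poly_Mapping.lookup m j)) = 0 \<longleftrightarrow> (\<forall>j\<in>UNIV. u j * int (Poly_Mapping.lookup m j) = 0)"
    by (rule sum_nonneg_eq_0_iff) (simp_all add: nn)
  have "\<forall>j\<in>UNIV. u j * int (Poly_Mapping.lookup m j) = 0"
    using assms(2) eq unfolding wdeg_def by blast
  then have "u i * int (Poly_Mapping.lookup m i) = 0" by blast
  moreover have "u i \<noteq> 0" using assms(1) by (metis order.irrefl)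
  ultimately show "Poly_Mapping.lookup m i = Poly_Mapping.lookup 0 i" by simp
qed
lemma tdeg_nonneg: "\<forall>i. u i > 0 \<Longrightarrow> p \<noteq> 0 \<Longrightarrow> 0 \<le> tdeg u p"
proof -
  assume u: "\<forall>i. u i > 0" and p: "p \<noteq> 0"
  obtain m where "tdeg u p = wdeg u m" using tdeg_in[OF p, of u] by blast
  then show ?thesis using wdeg_nonneg[OF u, of m] by simp
qed

lemma const_unit:
  fixes b :: "('v::finite, 'k::field) mpoly"
  assumes u: "\<forall>i. u i > 0" and b: "b \<noteq> 0" "tdeg u b \<le> 0"
  shows "b dvd 1"
proof -
  have keys: "m = 0" if "m \<in> Poly_Mapping.keys b" for m
  proof -
    have "wdeg u m \<le> 0" using tdeg_ge[OF that, of u] b(2) by simp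
    then have "wdeg u m = 0" using wdeg_nonneg[OF u, of m] by simp
    then show ?thesis using wdeg_zero_iff[OF u] by blast
  qed
  define c where "c = Poly_Mapping.lookup b 0"
  have bc: "b = Poly_Mapping.single 0 c"
    by (rule poly_mapping_eqI) (metis c_def keys in_keys_iff lookup_single_eq lookup_single_not_eq)
  then have "c \<noteq> 0" using b(1) by auto
  then have "b * Poly_Mapping.single 0 (inverse c) = 1"
    by (simp add: bc mult_single)
  then show ?thesis by (metis dvdI)
qed

lemma unit_width:
  fixes p :: "('v::finite, 'k::idom) mpoly"
  assumes "p dvd 1"
  shows "width u p = 0"
proof -
  obtain r where r: "1 = p * r" using assms by (auto elim: dvdE)
  then have pr: "p \<noteq> 0" "r \<noteq> 0" by auto
  have "width u (1::('v, 'k) mpoly) = 0" by (rule whomog_width[OF _ whomog_one]) simp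
  then have "width u p + width u r = 0" using r width_mult[OF pr] by simp
  then show ?thesis using width_nonneg[OF pr(1), of u] width_nonneg[OF pr(2), of u] by simp
qed

lemma exists_nonhomog_factor:
  fixes Q :: "('v::finite, 'k::field) mpoly"
  assumes u: "\<forall>i. u i > 0"
  shows "Q \<noteq> 0 \<Longrightarrow> width u Q > 0 \<Longrightarrow> \<exists>g. irreducible g \<and> g dvd Q \<and> width u g > 0"
proof (induction "nat (tdeg u Q)" arbitrary: Q rule: less_induct)
  case (less Q)
  show ?case
  proof (cases "irreducible Q")
    case True then show ?thesis using less.prems by auto
  next
    case False
    have "\<not> Q dvd 1" using unit_width less.prems by force
    then obtain a b where ab: "Q = a * b" "\<not> a dvd 1" "\<not> b dvd 1"
      using False less.prems(1) by (auto simp: irreducible_def)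
    then have abnz: "a \<noteq> 0" "b \<noteq> 0" using less.prems(1) by auto
    have wQ: "width u Q = width u a + width u b" using ab(1) width_mult[OF abnz] by simp
    have tQ: "tdeg u Q = tdeg u a + tdeg u b" using ab(1) tdeg_mult[OF abnz] by simp
    have ta: "tdeg u a > 0" using const_unit[OF u abnz(1)] ab(2) by force
    have tb: "tdeg u b > 0" using const_unit[OF u abnz(2)] ab(3) by force
    show ?thesis
    proof (cases "width u a > 0")
      case True
      have "nat (tdeg u a) < nat (tdeg u Q)" using tQ ta tb by simp
      then obtain g where "irreducible g" "g dvd a" "width u g > 0"
        using less.hyps[of a] abnz True by blast
      then show ?thesis using ab(1) by auto
    next
      case False
      then have "width u b > 0" using wQ less.prems(2) by simp
      moreover have "nat (tdeg u b) < nat (tdeg u Q)" using tQ ta tb by simp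
      ultimately obtain g where "irreducible g" "g dvd b" "width u g > 0"
        using less.hyps[of b] abnz by blast
      then show ?thesis using ab(1) by auto
    qed
  qed
qed

lemma exact_exponent:
  fixes Q g :: "('v::finite, 'k::field) mpoly"
  assumes "Q \<noteq> 0" "g dvd Q" "width u g > 0"
  shows "\<exists>e\<ge>1. g ^ e dvd Q \<and> \<not> g ^ Suc e dvd Q"
proof -
  have gnz: "g \<noteq> 0" using assms(1,2) by auto
  have bound: "int n * width u g \<le> width u Q" if "g ^ n dvd Q" for n
    using width_dvd[OF that assms(1), of u] width_power[OF gnz, of n u] by simp
  define N where "N = Suc (nat (width u Q))"
  have "\<not> g ^ N dvd Q"
  proof
    assume "g ^ N dvd Q"
    then have "int N * width u g \<le> width u Q" by (rule bound)
    moreover have "int N * 1 \<le> int N * width u g" using assms(3) by (intro mult_left_mono) auto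
    moreover have "width u Q < int N" unfolding N_def using width_nonneg[OF assms(1), of u] by simp
    ultimately show False by simp
  qed
  define n0 where "n0 = (LEAST n. \<not> g ^ n dvd Q)"
  have n0: "\<not> g ^ n0 dvd Q" unfolding n0_def by (rule LeastI) fact
  have below: "g ^ n dvd Q" if "n < n0" for n using not_less_Least[OF that[unfolded n0_def]] by simp
  have "n0 \<noteq> 0"
  proof
    assume "n0 = 0" then show False using n0 by simp
  qed
  moreover have "n0 \<noteq> 1" using n0 assms(2) by auto
  ultimately obtain e where e: "n0 = Suc e" "e \<ge> 1" by (cases n0) auto
  then show ?thesis using n0 below[of e] by auto
qed


lemma E_lookup_i:
  fixes g :: "('v::finite, 'k::comm_ring_1) mpoly"
  shows "Poly_Mapping.lookup (Poly_Mapping.single (Poly_Mapping.single i 1) (of_int (u i)) * pdiff i g) m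
      = of_int (u i * int (Poly_Mapping.lookup m i)) * Poly_Mapping.lookup g m"
proof (cases "Poly_Mapping.lookup m i = 0")
  case True
  have "\<not> (\<exists>m'. m = Poly_Mapping.single i 1 + m')"
  proof
    assume "\<exists>m'. m = Poly_Mapping.single i 1 + m'"
    then obtain m' where "m = Poly_Mapping.single i 1 + m'" by blast
    then have "Poly_Mapping.lookup m i = 1 + Poly_Mapping.lookup m' i" by (simp add: lookup_add)
    then show False using True by simp
  qed
  then show ?thesis using True by (simp add: lookup_single_mult)
next
  case False
  define m' where "m' = m - Poly_Mapping.single i 1"
  have m: "m = Poly_Mapping.single i 1 + m'"
    by (rule poly_mapping_eqI) (use False in \<open>auto simp: m'_def lookup_add lookup_minus lookup_single when_def\<close>)
  have m2: "m' + Poly_Mapping.single i 1 = m" using m by (simp add: add.commute)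
  have mi: "Poly_Mapping.lookup m' i + 1 = Poly_Mapping.lookup m i"
    using m by (simp add: lookup_add)
  have "Poly_Mapping.lookup (Poly_Mapping.single (Poly_Mapping.single i 1) (of_int (u i)) * pdiff i g) m
      = of_int (u i) * Poly_Mapping.lookup (pdiff i g) m'"
    by (subst m) (rule lookup_single_mult_add)
  also have "\<dots> = of_int (u i) * (of_nat (Poly_Mapping.lookup m i) * Poly_Mapping.lookup g m)"
    by (simp only: lookup_pdiff mi m2)
  also have "\<dots> = of_int (u i * int (Poly_Mapping.lookup m i)) * Poly_Mapping.lookup g m"
    by simp
  finally show ?thesis .
qed

lemma E_lookup:
  fixes g :: "('v::finite, 'k::comm_ring_1) mpoly"
  shows "Poly_Mapping.lookup (\<Sum>i\<in>UNIV. Poly_Mapping.single (Poly_Mapping.single i 1) (of_int (u i)) * pdiff i g) m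
      = of_int (wdeg u m) * Poly_Mapping.lookup g m"
  by (simp only: lookup_sum E_lookup_i) (simp add: wdeg_def sum_distrib_right)

lemma dir2:
  fixes Q :: "('v::finite, 'k::field_char_0) mpoly"
  assumes Q: "Q \<noteq> 0" and u: "\<forall>i. u i > 0" and nh: "width u Q > 0"
  shows "\<not> graded_der_set u (\<lambda>i. - u i) (Dlog Q)"
proof
  assume gr: "graded_der_set u (\<lambda>i. - u i) (Dlog Q)"
  obtain g where g: "irreducible g" "g dvd Q" "width u g > 0"
    using exists_nonhomog_factor[OF u Q nh] by blast
  obtain e where e: "e \<ge> 1" "g ^ e dvd Q" "\<not> g ^ Suc e dvd Q"
    using exact_exponent[OF Q g(2,3)] by blast
  have gnz: "g \<noteq> 0" using g(1) by auto
  define X where "X i = Poly_Mapping.single (Poly_Mapping.single i (1::nat)) (of_int (u i) :: 'k)" for i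
  have hX: "whomog u (u i) (X i)" for i
    using whomog_single[of u "Poly_Mapping.single i 1" "of_int (u i)"] by (simp add: X_def wdeg_single)
  define \<delta> where "\<delta> i = Q * X i" for i
  have \<delta>in: "\<delta> \<in> Dlog Q"
    unfolding Dlog_def Dge_def
  proof (intro CollectI allI impI)
    fix g' :: "('v, 'k) mpoly" and e' assume "irreducible g' \<and> g' dvd Q \<and> g' ^ e' dvd Q \<and> \<not> g' ^ Suc e' dvd Q"
    then have d: "g' ^ e' dvd Q" by blast
    have "Q dvd der_apply \<delta> g'"
      unfolding der_apply_def \<delta>_def by (intro dvd_sum) (simp add: mult.assoc)
    then show "g' ^ e' dvd der_apply \<delta> g'" using d dvd_trans by blast
  qed
  define d where "d = tdeg u Q"
  define Qd where "Qd = hcomp u d Q"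
  have Qdnz: "Qd \<noteq> 0" unfolding Qd_def d_def using hcomp_ne_iff tdeg_in[OF Q] by blast
  have hQd: "whomog u d Qd" unfolding Qd_def by (rule whomog_hcomp)
  have comp: "hcomp_der u (\<lambda>i. - u i) d \<delta> = (\<lambda>i. X i * Qd)"
  proof
    fix i
    have "hcomp u (d - - u i) (Q * X i) = hcomp u (d + u i) (X i * Q)" by (simp add: mult.commute)
    also have "\<dots> = X i * hcomp u (d + u i - u i) Q" by (rule hcomp_mult_homog[OF hX])
    finally show "hcomp_der u (\<lambda>i. - u i) d \<delta> i = X i * Qd"
      by (simp add: hcomp_der_def \<delta>_def Qd_def)
  qed
  have "hcomp_der u (\<lambda>i. - u i) d \<delta> \<in> Dlog Q" using gr \<delta>in by (auto simp: graded_der_set_def)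
  then have "g ^ e dvd der_apply (\<lambda>i. X i * Qd) g"
    using g e unfolding comp Dlog_def Dge_def by blast
  moreover have "der_apply (\<lambda>i. X i * Qd) g = Qd * (\<Sum>i\<in>UNIV. X i * pdiff i g)"
    by (simp add: der_apply_def sum_distrib_left algebra_simps)
  moreover have "g dvd g ^ e" using e(1) by (simp add: dvd_power)
  ultimately have d1: "g dvd Qd * (\<Sum>i\<in>UNIV. X i * pdiff i g)" by (metis (no_types, lifting) dvd_trans)
  define T where "T = tdeg u g"
  define F where "F = (\<Sum>i\<in>UNIV. X i * pdiff i g) - Poly_Mapping.single 0 (of_int T) * g"
  have d2: "g dvd Qd * (Poly_Mapping.single 0 (of_int T) * g)" by simp
  have gQF: "g dvd Qd * F" unfolding F_def right_diff_distrib using d1 d2 by (rule dvd_diff)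
  have lF: "Poly_Mapping.lookup F m = of_int (wdeg u m - T) * Poly_Mapping.lookup g m" for m
    unfolding F_def X_def lookup_minus E_lookup lookup_const_mult by (simp add: algebra_simps)
  have keysF: "m \<in> Poly_Mapping.keys F \<longleftrightarrow> m \<in> Poly_Mapping.keys g \<and> wdeg u m \<noteq> T" for m
    by (auto simp: in_keys_iff lF)
  obtain m0 where m0: "m0 \<in> Poly_Mapping.keys g" "wdeg u m0 = bdeg u g"
    using bdeg_in[OF gnz, of u] by (metis imageE)
  have "bdeg u g < T" using g(3) by (simp add: width_def T_def)
  then have m0F: "m0 \<in> Poly_Mapping.keys F" using keysF m0 by simp
  then have Fnz: "F \<noteq> 0" by auto
  have "tdeg u F < T"
  proof -
    obtain m where m: "m \<in> Poly_Mapping.keys F" "wdeg u m = tdeg u F" using tdeg_in[OF Fnz, of u] by (metis imageE)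
    then have "m \<in> Poly_Mapping.keys g" "wdeg u m \<noteq> T" using keysF by blast+
    moreover have "wdeg u m \<le> T" unfolding T_def by (rule tdeg_ge) fact
    ultimately show ?thesis using m(2) by simp
  qed
  moreover have "bdeg u g \<le> bdeg u F"
  proof -
    obtain m where m: "m \<in> Poly_Mapping.keys F" "wdeg u m = bdeg u F" using bdeg_in[OF Fnz, of u] by (metis imageE)
    then have "m \<in> Poly_Mapping.keys g" using keysF by blast
    then have "bdeg u g \<le> wdeg u m" by (rule bdeg_le)
    then show ?thesis using m(2) by simp
  qed
  ultimately have wF: "width u F < width u g" by (simp add: width_def T_def)
  have "width u (Qd * F) = width u Qd + width u F" by (rule width_mult[OF Qdnz Fnz])
  also have "width u Qd = 0" by (rule whomog_width[OF Qdnz hQd])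
  finally have "width u (Qd * F) < width u g" using wF by simp
  moreover have "width u g \<le> width u (Qd * F)"
    by (rule width_dvd[OF gQF mult_lead_nonzero[OF Qdnz Fnz]])
  ultimately show False by simp
qed

theorem mainTheorem5:
  fixes Q :: "('v::finite, 'k::field_char_0) mpoly"
    and u :: "'v \<Rightarrow> int"
  assumes "Q \<noteq> 0"
    and "\<forall>i. u i > 0"
  shows "(\<exists>d. whomog u d Q) \<longleftrightarrow>
         (\<forall>v :: 'v \<Rightarrow> int. (\<exists>k. \<forall>i. u i + v i = k) \<longrightarrow> graded_der_set u v (Dlog Q))"
proof
  assume "\<exists>d. whomog u d Q"
  then obtain D where "whomog u D Q" by blast
  then show "\<forall>v :: 'v \<Rightarrow> int. (\<exists>k. \<forall>i. u i + v i = k) \<longrightarrow> graded_der_set u v (Dlog Q)"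
    using dir1[OF assms(1)] by blast
next
  assume R: "\<forall>v :: 'v \<Rightarrow> int. (\<exists>k. \<forall>i. u i + v i = k) \<longrightarrow> graded_der_set u v (Dlog Q)"
  show "\<exists>d. whomog u d Q"
  proof (rule ccontr)
    assume nh: "\<not> (\<exists>d. whomog u d Q)"
    have "width u Q \<noteq> 0" using width_zero_whomog nh by blast
    then have "width u Q > 0" using width_nonneg[OF assms(1), of u] by simp
    then have "\<not> graded_der_set u (\<lambda>i. - u i) (Dlog Q)" by (rule dir2[OF assms(1,2)])
    moreover have "graded_der_set u (\<lambda>i. - u i) (Dlog Q)" using R by force
    ultimately show False by blast
  qed
qed

end
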